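(* Let $q$ be a nonnegative continuous function on $[0,+\infty)$ with $\int_0^{+\infty}tq(t)\,dt<+\infty$, let $h$ be the solution of $h'+h^2-q=0$ with $\lim_{t\to0^+}th(t)=1$, and let $v\in C^2((0,+\infty))$ be the solution of $v''+hv'=0$ with $v'>0$ and $\lim_{t\to0^+}\frac{v(t)}{\log t}=1$. Then $\lim_{t\to+\infty}\frac{v(t)}{\log t}$ exists and $\frac1{I(q)}\le\lim_{t\to+\infty}\frac{v(t)}{\log t}\le1$. Moreover, $\log t+v(1)\ge v(t)\ge\frac1{I(q)}\log t+v(1)$ for all $t>1$.
   Context: $I(q):=\exp\left(\int_0^{+\infty}tq(t)\,dt\right)$. *)

theory Defs
  imports "HOL-Analysis.Analysis"
begin

definition Iq :: "(real \<Rightarrow> real) \<Rightarrow> real" where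
  "Iq q = exp (integral {0..} (\<lambda>t. t * q t))"

end

theory Submission
  imports Defs
begin

lemma pick_at_right0:
  assumes "eventually P (at_right (0::real))"
  obtains s where "P s"
  using eventually_happens'[OF _ assms] trivial_limit_at_right_real by blast

lemma upper_aux:
  fixes v :: "real \<Rightarrow> real"
  assumes lim: "((\<lambda>t. v t / ln t) \<longlongrightarrow> 1) (at_right 0)"
    and s0: "s0 > 0" and bd: "\<And>s. 0 < s \<Longrightarrow> s \<le> s0 \<Longrightarrow> v s \<le> C + a * ln s"
  shows "a \<le> 1"
proof (rule ccontr)
  assume na: "\<not> a \<le> 1"
  have e1: "eventually (\<lambda>s. v s / ln s < (1+a)/2) (at_right 0)"
    using lim na by (intro order_tendstoD(2)) auto
  have e2: "eventually (\<lambda>s. ln s < 2*C/(1-a)) (at_right 0)"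
    using ln_at_0 by (simp add: filterlim_at_bot_dense)
  have e3: "eventually (\<lambda>s. 0 < s \<and> s < min s0 1) (at_right 0)"
    using s0 by (auto simp: eventually_at_right_field intro!: exI[of _ "min s0 1"])
  obtain s where s: "v s / ln s < (1+a)/2" "ln s < 2*C/(1-a)" "0 < s" "s < min s0 1"
    using pick_at_right0[OF eventually_conj[OF e1 eventually_conj[OF e2 e3]]] by blast
  have ln: "ln s < 0" using s by simp
  have "v s > (1+a)/2 * ln s" using s(1) ln by (simp add: divide_less_eq mult.commute)
  moreover have "v s \<le> C + a * ln s" using bd s by simp
  ultimately have A: "(1-a)/2 * ln s < C" by (simp add: algebra_simps)
  have "ln s * (1-a) > 2*C" using s(2) na by (simp add: less_divide_eq mult.commute)
  then show False using A by (simp add: algebra_simps)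
qed

lemma lower_aux:
  fixes v :: "real \<Rightarrow> real"
  assumes lim: "((\<lambda>t. v t / ln t) \<longlongrightarrow> 1) (at_right 0)"
    and s0: "s0 > 0" and bd: "\<And>s. 0 < s \<Longrightarrow> s \<le> s0 \<Longrightarrow> v s \<ge> C + b * ln s"
  shows "b \<ge> 1"
proof (rule ccontr)
  assume na: "\<not> b \<ge> 1"
  have e1: "eventually (\<lambda>s. v s / ln s > (1+b)/2) (at_right 0)"
    using lim na by (intro order_tendstoD(1)) auto
  have e2: "eventually (\<lambda>s. ln s < 2*C/(1-b)) (at_right 0)"
    using ln_at_0 by (simp add: filterlim_at_bot_dense)
  have e3: "eventually (\<lambda>s. 0 < s \<and> s < min s0 1) (at_right 0)"
    using s0 by (auto simp: eventually_at_right_field intro!: exI[of _ "min s0 1"])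
  obtain s where s: "v s / ln s > (1+b)/2" "ln s < 2*C/(1-b)" "0 < s" "s < min s0 1"
    using pick_at_right0[OF eventually_conj[OF e1 eventually_conj[OF e2 e3]]] by blast
  have ln: "ln s < 0" using s by simp
  have "v s < (1+b)/2 * ln s" using s(1) ln by (simp add: less_divide_eq mult.commute)
  moreover have "v s \<ge> C + b * ln s" using bd s by simp
  ultimately have A: "(1-b)/2 * ln s > C" by (simp add: algebra_simps)
  have "ln s * (1-b) < 2*C" using s(2) na by (simp add: less_divide_eq mult.commute)
  then show False using A by (simp add: algebra_simps)
qed

theorem lemma4p2:
  fixes q h h' v v' v'' :: "real \<Rightarrow> real"
  assumes q_cont: "continuous_on {0..} q"
    and q_nonneg: "\<And>t. t \<ge> 0 \<Longrightarrow> q t \<ge> 0"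
    and q_int: "(\<lambda>t. t * q t) integrable_on {0..}"
    and h_deriv: "\<And>t. t > 0 \<Longrightarrow> (h has_real_derivative h' t) (at t)"
    and h_ode: "\<And>t. t > 0 \<Longrightarrow> h' t + (h t)\<^sup>2 - q t = 0"
    and h_lim: "((\<lambda>t. t * h t) \<longlongrightarrow> 1) (at_right 0)"
    and v_deriv: "\<And>t. t > 0 \<Longrightarrow> (v has_real_derivative v' t) (at t)"
    and v'_deriv: "\<And>t. t > 0 \<Longrightarrow> (v' has_real_derivative v'' t) (at t)"
    and v''_cont: "continuous_on {0<..} v''"
    and v_ode: "\<And>t. t > 0 \<Longrightarrow> v'' t + h t * v' t = 0"
    and v'_pos: "\<And>t. t > 0 \<Longrightarrow> v' t > 0"
    and v_lim: "((\<lambda>t. v t / ln t) \<longlongrightarrow> 1) (at_right 0)"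
  shows "\<exists>L. ((\<lambda>t. v t / ln t) \<longlongrightarrow> L) at_top
            \<and> 1 / Iq q \<le> L \<and> L \<le> 1
            \<and> (\<forall>t>1. ln t + v 1 \<ge> v t \<and> v t \<ge> ln t / Iq q + v 1)"
proof -
  define u where "u t = t * h t - 1" for t
  define G where "G t = t * v' t" for t
  define Q where "Q t = integral {0..t} (\<lambda>s. s * q s)" for t
  define Qi where "Qi = integral {0..} (\<lambda>t. t * q t)"
  have h'eq: "h' t = q t - (h t)\<^sup>2" if "t > 0" for t using h_ode[OF that] by simp
  have v''eq: "v'' t = - h t * v' t" if "t > 0" for t using v_ode[OF that] by simp
  have Gpos: "G t > 0" if "t > 0" for t using v'_pos[OF that] that by (simp add: G_def)
  have u_lim: "(u \<longlongrightarrow> 0) (at_right 0)"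
    unfolding u_def using tendsto_diff[OF h_lim tendsto_const[of 1]] by simp
  have F_mono: "u a / v' a \<le> u b / v' b" if "0 < a" "a \<le> b" for a b
  proof (rule DERIV_nonneg_imp_nondecreasing[OF that(2)])
    fix x assume x: "a \<le> x" "x \<le> b"
    then have x0: "x > 0" using that by simp
    have vp: "v' x > 0" using v'_pos[OF x0] .
    note D0 = DERIV_divide[OF DERIV_diff[OF DERIV_mult[OF DERIV_ident h_deriv[OF x0]] DERIV_const[of 1]] v'_deriv[OF x0]]
    have D: "((\<lambda>t. u t / v' t) has_real_derivative x * q x / v' x) (at x)"
      unfolding u_def
      by (rule DERIV_cong[OF D0]) (use vp in \<open>simp_all add: h'eq[OF x0] v''eq[OF x0] field_simps power2_eq_square\<close>)
    moreover have "x * q x / v' x \<ge> 0" using vp x0 q_nonneg[of x] by simp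
    ultimately show "\<exists>y. ((\<lambda>t. u t / v' t) has_real_derivative y) (at x) \<and> 0 \<le> y"
      using D by metis
  qed
  have u_nonneg: "u t \<ge> 0" if "t > 0" for t
  proof (rule ccontr)
    assume "\<not> u t \<ge> 0"
    define c where "c = - (u t / v' t)"
    have c: "c > 0" using v'_pos[OF that] \<open>\<not> u t \<ge> 0\<close> by (simp add: c_def divide_neg_pos)
    have "eventually (\<lambda>s. u s > - c) (at_right 0)"
      using u_lim c by (intro order_tendstoD(1)) auto
    then obtain b where b: "b > 0" "\<And>y. y > 0 \<Longrightarrow> y < b \<Longrightarrow> u y > - c"
      by (auto simp: eventually_at_right_field)
    define \<delta> where "\<delta> = min (b/2) t"
    have d: "\<delta> > 0" "\<delta> \<le> t" "\<delta> < b" using b that by (auto simp: \<delta>_def)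
    have v'small: "v' s \<le> 1" if "0 < s" "s \<le> \<delta>" for s
    proof -
      have "u s / v' s \<le> - c" using F_mono[of s t] that d by (simp add: c_def)
      then have "u s \<le> - c * v' s" using v'_pos[of s] that by (simp add: divide_le_eq)
      moreover have "u s > - c" using b(2)[of s] that d by simp
      ultimately have "c * v' s < c" by simp
      then show ?thesis using c by simp
    qed
    have "v s \<ge> (v \<delta> - \<delta>) + 0 * ln s" if "0 < s" "s \<le> \<delta>" for s
    proof -
      have "v \<delta> - \<delta> \<le> v s - s"
      proof (rule DERIV_nonpos_imp_nonincreasing[OF that(2)])
        fix x assume "s \<le> x" "x \<le> \<delta>"
        then have x0: "x > 0" using that by simp
        have "((\<lambda>t. v t - t) has_real_derivative v' x - 1) (at x)"
          by (rule DERIV_diff[OF v_deriv[OF x0] DERIV_ident])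
        then show "\<exists>y. ((\<lambda>t. v t - t) has_real_derivative y) (at x) \<and> y \<le> 0"
          using v'small[of x] x0 \<open>x \<le> \<delta>\<close> by auto
      qed
      then show ?thesis using that by simp
    qed
    from lower_aux[OF v_lim d(1) this] show False by simp
  qed
  have DG: "(G has_real_derivative (1 * v' x + v'' x * x)) (at x)" if x0: "x > 0" for x
    unfolding G_def[abs_def] by (rule DERIV_mult[OF DERIV_ident v'_deriv[OF x0]])
  have G_anti: "G b \<le> G a" if "0 < a" "a \<le> b" for a b
  proof (rule DERIV_nonpos_imp_nonincreasing[OF that(2)])
    fix x assume x: "a \<le> x" "x \<le> b"
    then have x0: "x > 0" using that by simp
    have D: "(G has_real_derivative (- v' x * u x)) (at x)"
      using DG[OF x0] by (simp add: v''eq[OF x0] u_def algebra_simps)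
    moreover have "- v' x * u x \<le> 0" using v'_pos[OF x0] u_nonneg[OF x0] by simp
    ultimately show "\<exists>y. (G has_real_derivative y) (at x) \<and> y \<le> 0" using D by metis
  qed
  have Gphi: "((\<lambda>t. v t - a * ln t) has_real_derivative ((G x - a) / x)) (at x)"
    if "x > 0" for x a
  proof -
    have "((\<lambda>t. v t - a * ln t) has_real_derivative (v' x - a * (1 / x))) (at x)"
      by (rule DERIV_diff[OF v_deriv[OF that] DERIV_cmult[OF DERIV_ln_divide[OF that]]])
    moreover have "v' x - a * (1 / x) = (G x - a) / x" using that by (simp add: G_def field_simps)
    ultimately show ?thesis by simp
  qed
  have G_le1: "G t \<le> 1" if "t > 0" for t
  proof (rule ccontr)
    assume "\<not> G t \<le> 1"
    define a where "a = G t"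
    have "v s \<le> (v t - a * ln t) + a * ln s" if "0 < s" "s \<le> t" for s
    proof -
      have "v s - a * ln s \<le> v t - a * ln t"
      proof (rule DERIV_nonneg_imp_nondecreasing[OF that(2)])
        fix x assume x: "s \<le> x" "x \<le> t"
        then have x0: "x > 0" using that by simp
        have "G x \<ge> a" using G_anti[OF x0 x(2)] by (simp add: a_def)
        then show "\<exists>y. ((\<lambda>t. v t - a * ln t) has_real_derivative y) (at x) \<and> 0 \<le> y"
          using Gphi[OF x0, of a] x0 by (intro exI[of _ "(G x - a) / x"]) simp
      qed
      then show ?thesis by simp
    qed
    from upper_aux[OF v_lim \<open>t > 0\<close> this] show False using \<open>\<not> G t \<le> 1\<close> by (simp add: a_def)
  qed
  have G_near1: "eventually (\<lambda>s. G s \<ge> b) (at_right 0)" if "b < 1" for b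
  proof (rule ccontr)
    assume ne: "\<not> eventually (\<lambda>s. G s \<ge> b) (at_right 0)"
    have Gb: "G s < b" if "s > 0" for s
    proof -
      from ne have "\<not> (\<forall>y>0. y < s \<longrightarrow> G y \<ge> b)" using that by (auto simp: eventually_at_right_field)
      then obtain y where "y > 0" "y < s" "G y < b" by auto
      then show ?thesis using G_anti[of y s] by simp
    qed
    have "v s \<ge> v 1 + b * ln s" if "0 < s" "s \<le> 1" for s
    proof -
      have "v 1 - b * ln 1 \<le> v s - b * ln s"
      proof (rule DERIV_nonpos_imp_nonincreasing[OF that(2)])
        fix x assume x: "s \<le> x" "x \<le> 1"
        then have x0: "x > 0" using that by simp
        show "\<exists>y. ((\<lambda>t. v t - b * ln t) has_real_derivative y) (at x) \<and> y \<le> 0"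
          using Gphi[OF x0, of b] x0 Gb[OF x0] by (intro exI[of _ "(G x - b) / x"]) (simp add: divide_nonpos_pos)
      qed
      then show ?thesis by simp
    qed
    from lower_aux[OF v_lim zero_less_one this] show False using that by simp
  qed
  have sq_cont: "continuous_on {0..b} (\<lambda>s. s * q s)" for b
    by (intro continuous_intros continuous_on_subset[OF q_cont]) auto
  have Q_deriv: "(Q has_real_derivative x * q x) (at x)" if "x > 0" for x
  proof -
    have "(Q has_real_derivative x * q x) (at x within {0..x+1})"
      unfolding Q_def[abs_def] using integral_has_real_derivative[OF sq_cont[of "x+1"], of x] that by simp
    moreover have "x \<in> interior {0..x+1}" using that by simp
    ultimately show ?thesis using at_within_interior[of x "{0..x+1}"] by metis
  qed
  have Q_nonneg: "Q t \<ge> 0" if "t \<ge> 0" for t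
    unfolding Q_def
    by (rule integral_nonneg[OF integrable_continuous_interval[OF sq_cont]]) (use q_nonneg in auto)
  have Q_le: "Q t \<le> Qi" if "t \<ge> 0" for t
    unfolding Q_def Qi_def
    by (rule integral_subset_le[OF _ integrable_continuous_interval[OF sq_cont] q_int]) (use q_nonneg in auto)
  define psi where "psi t = ln (G t) - u t + Q t" for t
  have psi_mono: "psi a \<le> psi b" if "0 < a" "a \<le> b" for a b
  proof (rule DERIV_nonneg_imp_nondecreasing[OF that(2)])
    fix x assume x: "a \<le> x" "x \<le> b"
    then have x0: "x > 0" using that by simp
    have vp: "v' x > 0" using v'_pos[OF x0] .
    note D0 = DERIV_add[OF DERIV_diff[OF DERIV_chain2[OF DERIV_ln_divide[OF Gpos[OF x0]] DG[OF x0]]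
       DERIV_diff[OF DERIV_mult[OF DERIV_ident h_deriv[OF x0]] DERIV_const[of 1]]] Q_deriv[OF x0]]
    have D: "(psi has_real_derivative (x * h x - 1)\<^sup>2 / x) (at x)"
      unfolding psi_def[abs_def] u_def
      by (rule DERIV_cong[OF D0]) (use vp x0 in \<open>simp add: G_def h'eq[OF x0] v''eq[OF x0] field_simps power2_eq_square\<close>)
    moreover have "(x * h x - 1)\<^sup>2 / x \<ge> 0" using x0 by simp
    ultimately show "\<exists>y. (psi has_real_derivative y) (at x) \<and> 0 \<le> y" using D by metis
  qed
  have psi_nonneg: "psi T \<ge> 0" if "T > 0" for T
  proof (rule ccontr)
    assume "\<not> psi T \<ge> 0"
    define e where "e = - psi T / 4"
    have e: "e > 0" using \<open>\<not> psi T \<ge> 0\<close> by (simp add: e_def)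
    have e1: "eventually (\<lambda>s. G s \<ge> exp (-e)) (at_right 0)" using G_near1 e by simp
    have e2: "eventually (\<lambda>s. u s < e) (at_right 0)" using u_lim e by (intro order_tendstoD(2)) auto
    have e3: "eventually (\<lambda>s. 0 < s \<and> s < T) (at_right 0)"
      using that by (auto simp: eventually_at_right_field)
    obtain s where s: "G s \<ge> exp (-e)" "u s < e" "0 < s" "s < T"
      using pick_at_right0[OF eventually_conj[OF e1 eventually_conj[OF e2 e3]]] by blast
    have "ln (G s) \<ge> -e" using s(1) Gpos[OF s(3)] by (metis ln_exp ln_le_cancel_iff exp_gt_zero)
    then have "psi s \<ge> -2*e" using s Q_nonneg[of s] by (simp add: psi_def)
    moreover have "psi s \<le> psi T" using psi_mono[of s T] s by simp
    ultimately show False using e by (simp add: e_def)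
  qed
  have I_eq: "1 / Iq q = exp (- Qi)" by (simp add: Iq_def Qi_def exp_minus field_simps)
  have G_lower: "G t \<ge> 1 / Iq q" if "t > 0" for t
  proof -
    have "ln (G t) \<ge> - Qi"
      using psi_nonneg[OF that] u_nonneg[OF that] Q_le[of t] that by (simp add: psi_def)
    then have "exp (- Qi) \<le> G t" using Gpos[OF that] by (metis exp_le_cancel_iff exp_ln)
    then show ?thesis using I_eq by simp
  qed
  define L where "L = Inf (G ` {1..})"
  have bdd: "bdd_below (G ` {1..})" using G_lower by (intro bdd_belowI[of _ "1 / Iq q"]) auto
  have L_low: "1 / Iq q \<le> L" unfolding L_def using G_lower by (intro cInf_greatest) auto
  have L_up: "L \<le> 1" unfolding L_def using cInf_lower[OF _ bdd, of "G 1"] G_le1[of 1] by simp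
  have G_lim: "(G \<longlongrightarrow> L) at_top"
  proof (rule order_tendstoI)
    fix a assume "a < L"
    have GL: "G x \<ge> L" if "x \<ge> 1" for x unfolding L_def using cInf_lower[OF _ bdd, of "G x"] that by simp
    show "eventually (\<lambda>x. a < G x) at_top"
      using eventually_ge_at_top[of "1::real"] by (rule eventually_mono) (use GL \<open>a < L\<close> in force)
  next
    fix a assume "L < a"
    then obtain y where y: "y \<in> G ` {1..}" "y < a" unfolding L_def
      using cInf_less_iff[of "G ` {1..}" a] bdd by auto
    then obtain t where t: "t \<ge> 1" "G t < a" by auto
    show "eventually (\<lambda>x. G x < a) at_top" using eventually_ge_at_top[of t]
      by (rule eventually_mono) (use G_anti[of t] t in force)
  qed
  have lim: "((\<lambda>t. v t / ln t) \<longlongrightarrow> L) at_top"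
  proof (rule lhospital_at_top_at_top[where f' = v' and g' = "\<lambda>x. 1 / x"])
    show "LIM x at_top. ln (x::real) :> at_top" by (rule ln_at_top)
    show "eventually (\<lambda>x. 1 / x \<noteq> (0::real)) at_top"
      using eventually_gt_at_top[of 0] by (rule eventually_mono) simp
    show "eventually (\<lambda>x. (v has_real_derivative v' x) (at x)) at_top"
      using eventually_gt_at_top[of 0] by (rule eventually_mono) (rule v_deriv)
    show "eventually (\<lambda>x. (ln has_real_derivative 1 / x) (at x)) at_top"
      using eventually_gt_at_top[of 0] by (rule eventually_mono) (rule DERIV_ln_divide)
    have "eventually (\<lambda>x. G x = v' x / (1 / x)) at_top"
      using eventually_gt_at_top[of 0] by (rule eventually_mono) (simp add: G_def)
    then show "((\<lambda>x. v' x / (1 / x)) \<longlongrightarrow> L) at_top" using G_lim by (simp add: tendsto_cong)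
  qed
  have bounds: "ln t + v 1 \<ge> v t \<and> v t \<ge> ln t / Iq q + v 1" if "t > 1" for t
  proof
    have "v t - 1 * ln t \<le> v 1 - 1 * ln 1"
    proof (rule DERIV_nonpos_imp_nonincreasing[where f="\<lambda>s. v s - 1 * ln s" and a=1 and b=t])
      show "1 \<le> t" using that by simp
      fix x assume x: "1 \<le> x" "x \<le> t"
      then have x0: "x > 0" by simp
      show "\<exists>y. ((\<lambda>t. v t - 1 * ln t) has_real_derivative y) (at x) \<and> y \<le> 0"
        using Gphi[OF x0, of 1] x0 G_le1[OF x0] by (intro exI[of _ "(G x - 1) / x"]) (simp add: divide_nonpos_pos)
    qed
    then show "ln t + v 1 \<ge> v t" by simp
    have "v 1 - (1 / Iq q) * ln 1 \<le> v t - (1 / Iq q) * ln t"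
    proof (rule DERIV_nonneg_imp_nondecreasing[where f="\<lambda>s. v s - (1 / Iq q) * ln s" and a=1 and b=t])
      show "1 \<le> t" using that by simp
      fix x assume x: "1 \<le> x" "x \<le> t"
      then have x0: "x > 0" by simp
      show "\<exists>y. ((\<lambda>t. v t - (1 / Iq q) * ln t) has_real_derivative y) (at x) \<and> 0 \<le> y"
        using Gphi[OF x0, of "1 / Iq q"] x0 G_lower[OF x0] by (intro exI[of _ "(G x - 1 / Iq q) / x"]) simp
    qed
    then show "v t \<ge> ln t / Iq q + v 1" by simp
  qed
  show ?thesis using lim L_low L_up bounds by blast
qed

end
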